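(* Let $\{P_n\}_{n\ge0}$ and $\{Q_n\}_{n\ge0}$ be Brenke polynomial sets generated by $$A_1(t)B_1(xt)=\sum_{n\ge0}\frac{P_n(x)}{n!}t^n,\qquad A_2(t)B_2(xt)=\sum_{n\ge0}\frac{Q_n(x)}{n!}t^n,$$ with $A_i(t)=\sum_k a^{(i)}_kt^k$, $B_i(t)=\sum_kb^{(i)}_kt^k$, $a^{(i)}_0\neq0$ and $b^{(i)}_k\ne0$ for all $k$. Let $\theta$ be the transfer operator from $B_1$ to $B_2$, acting termwise on formal power series in $t$ by $\theta(t^n)=\frac{b^{(2)}_n}{b^{(1)}_n}t^n$. Define the connection coefficients $C_m(n)$ by $Q_n(x)=\sum_{m=0}^nC_m(n)P_m(x)$. Then for every $m\ge0$, $$A_2(t)\,\theta\!\left(\frac{t^m}{A_1(t)}\right)=\sum_{n\ge m}\frac{m!}{n!}C_m(n)\,t^n$$ as formal power series in $t$.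
   Context: A polynomial set (PS) is a sequence $\{P_n\}_{n\ge0}$ of complex polynomials with $\deg P_n=n$. A Brenke PS is a PS generated (as formal power series in $t$) by $A(t)B(xt)=\sum_{n\ge0}P_n(x)t^n/n!$ with $A(t)=\sum_ka_kt^k$, $B(t)=\sum_kb_kt^k$, $a_0\neq0$, $b_k\ne0$ for all $k$. *)

theory Defs
  imports "HOL-Computational_Algebra.Computational_Algebra"
begin

text \<open>The generating function A(t) B(x t), as a formal power series in t whose
coefficients are polynomials in x: coefficient of t^n is
sum_k a_(n-k) b_k x^k.\<close>
definition brenke_gf :: "complex fps \<Rightarrow> complex fps \<Rightarrow> complex poly fps" where
  "brenke_gf A B = Abs_fps (\<lambda>n. [:fps_nth A n:]) * Abs_fps (\<lambda>k. monom (fps_nth B k) k)"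

definition brenke_ps :: "complex fps \<Rightarrow> complex fps \<Rightarrow> (nat \<Rightarrow> complex poly) \<Rightarrow> bool" where
  "brenke_ps A B P \<longleftrightarrow> fps_nth A 0 \<noteq> 0 \<and> (\<forall>k. fps_nth B k \<noteq> 0) \<and>
     brenke_gf A B = Abs_fps (\<lambda>n. smult (inverse (fact n)) (P n))"

definition transfer_op :: "complex fps \<Rightarrow> complex fps \<Rightarrow> complex fps \<Rightarrow> complex fps" where
  "transfer_op B1 B2 f = Abs_fps (\<lambda>n. fps_nth B2 n / fps_nth B1 n * fps_nth f n)"

end

theory Submission imports Defs begin
lemma gf_coeff: "coeff (brenke_gf A B $ n) j = (if j \<le> n then A$(n-j) * B$j else 0)"
proof -
  have "coeff (brenke_gf A B $ n) j = (\<Sum>i=0..n. A$i * (if n - i = j then B$(n-i) else 0))"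
    unfolding brenke_gf_def fps_mult_nth by (simp add: coeff_sum coeff_monom)
  also have "\<dots> = (if j \<le> n then A$(n-j) * B$j else 0)"
  proof (cases "j \<le> n")
    case True
    have "(\<Sum>i=0..n. A$i * (if n - i = j then B$(n-i) else 0)) = (\<Sum>i\<in>{0..n}. if i = n - j then A$i * B$j else 0)"
      using True by (intro sum.cong) auto
    thus ?thesis using True by (simp add: sum.delta)
  qed (auto intro!: sum.neutral)
  finally show ?thesis .
qed
lemma P_coeff: assumes "brenke_ps A B P"
  shows "coeff (P n) j = fact n * (if j \<le> n then A$(n-j) * B$j else 0)"
proof -
  have "brenke_gf A B $ n = smult (inverse (fact n)) (P n)"
    using assms unfolding brenke_ps_def by simp
  hence "inverse (fact n) * coeff (P n) j = (if j \<le> n then A$(n-j) * B$j else 0)"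
    using gf_coeff[of A B n j] by simp
  thus ?thesis by (simp add: field_simps)
qed
theorem mainTheorem5:
  fixes A1 B1 A2 B2 :: "complex fps"
    and P Q :: "nat \<Rightarrow> complex poly"
    and C :: "nat \<Rightarrow> nat \<Rightarrow> complex"
    and m :: nat
  assumes "brenke_ps A1 B1 P"
    and "brenke_ps A2 B2 Q"
    and "\<forall>n. Q n = (\<Sum>k\<le>n. smult (C k n) (P k))"
  shows "A2 * transfer_op B1 B2 (fps_X ^ m * inverse A1) =
         Abs_fps (\<lambda>n. if m \<le> n then fact m / fact n * C m n else 0)"
proof (rule fps_ext)
  fix n
  define g where "g = fps_X ^ m * inverse A1"
  define r where "r = (\<lambda>j. B2$j / B1$j)"
  have a10: "A1$0 \<noteq> 0" and b1: "\<And>j. B1$j \<noteq> 0"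
    using assms(1) unfolding brenke_ps_def by auto
  have gA: "g * A1 = fps_X ^ m"
    unfolding g_def using a10 by (simp add: mult.assoc inverse_mult_eq_1)
  have H: "A2$(n-j) * r j = inverse (fact n) *
       (\<Sum>k\<le>n. C k n * fact k * (if j \<le> k then A1$(k-j) else 0))" if "j \<le> n" for j
  proof -
    have "coeff (Q n) j = (\<Sum>k\<le>n. C k n * coeff (P k) j)"
      using assms(3) by (simp add: coeff_sum)
    hence "fact n * (A2$(n-j) * B2$j) =
        (\<Sum>k\<le>n. C k n * (fact k * (if j \<le> k then A1$(k-j) * B1$j else 0)))"
      using that P_coeff[OF assms(2), of n j] P_coeff[OF assms(1)] by simp
    also have "\<dots> = (\<Sum>k\<le>n. C k n * fact k * (if j \<le> k then A1$(k-j) else 0)) * B1$j"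
      by (simp add: sum_distrib_right) (rule sum.cong, auto)
    finally show ?thesis unfolding r_def using b1[of j]
      by (simp add: field_simps)
  qed
  have lhs: "(A2 * transfer_op B1 B2 g) $ n = (\<Sum>j=0..n. r j * g$j * A2$(n-j))"
    by (simp add: mult.commute[of A2] fps_mult_nth transfer_op_def r_def)
  also have "\<dots> = (\<Sum>j\<le>n. g$j * (A2$(n-j) * r j))"
    by (rule sum.cong) (auto simp: atLeast0AtMost)
  also have "\<dots> = (\<Sum>j\<le>n. g$j * (inverse (fact n) *
       (\<Sum>k\<le>n. C k n * fact k * (if j \<le> k then A1$(k-j) else 0))))"
    by (rule sum.cong) (auto simp: H)
  also have "\<dots> = inverse (fact n) * (\<Sum>k\<le>n. C k n * fact k *
       (\<Sum>j\<le>n. (if j \<le> k then g$j * A1$(k-j) else 0)))"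
  proof -
    have "(\<Sum>j\<le>n. g$j * (inverse (fact n) *
       (\<Sum>k\<le>n. C k n * fact k * (if j \<le> k then A1$(k-j) else 0)))) =
       inverse (fact n) * (\<Sum>j\<le>n. \<Sum>k\<le>n. C k n * fact k * (if j \<le> k then g$j * A1$(k-j) else 0))"
      unfolding sum_distrib_left by (intro sum.cong refl) auto
    also have "\<dots> = inverse (fact n) * (\<Sum>k\<le>n. \<Sum>j\<le>n. C k n * fact k * (if j \<le> k then g$j * A1$(k-j) else 0))"
      by (subst sum.swap) (rule refl)
    also have "\<dots> = inverse (fact n) * (\<Sum>k\<le>n. C k n * fact k *
       (\<Sum>j\<le>n. (if j \<le> k then g$j * A1$(k-j) else 0)))"
      by (simp add: sum_distrib_left)
    finally show ?thesis .
  qed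
  also have "\<dots> = inverse (fact n) * (\<Sum>k\<le>n. C k n * fact k * (if k = m then 1 else 0))"
  proof -
    have "(\<Sum>j\<le>n. (if j \<le> k then g$j * A1$(k-j) else 0)) = (if k = m then 1 else 0)"
      if "k \<le> n" for k
    proof -
      have "(\<Sum>j\<le>n. (if j \<le> k then g$j * A1$(k-j) else 0)) = (\<Sum>j\<in>{..k}. g$j * A1$(k-j))"
        using that by (simp add: sum.inter_filter[symmetric]) (rule sum.cong, auto)
      also have "\<dots> = (g * A1) $ k" by (simp add: fps_mult_nth atLeast0AtMost)
      finally show ?thesis by (simp add: gA)
    qed
    thus ?thesis by (intro arg_cong[where f="\<lambda>x. _ * x"] sum.cong) auto
  qed
  also have "\<dots> = (if m \<le> n then fact m / fact n * C m n else 0)"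
    by (simp add: if_distrib sum.delta field_simps cong: if_cong)
  finally show "(A2 * transfer_op B1 B2 (fps_X ^ m * inverse A1)) $ n =
      Abs_fps (\<lambda>n. if m \<le> n then fact m / fact n * C m n else 0) $ n"
    unfolding g_def by simp
qed
end
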